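(* Let $T$ be an equilateral triangle. Then for every positive integer $n$, $$h(n,T)=\left\lfloor \frac{n}{3} \right\rfloor \cdot \left\lfloor \frac{n+1}{3} \right\rfloor \cdot \left\lfloor \frac{n+2}{3} \right\rfloor.$$
   Context: Let $T$ be a triangle with side lengths $a,b,c$, let $\varepsilon>0$ and $\varepsilon'=\varepsilon\cdot\min\{a,b,c\}$. A triangle $A'B'C'$ is $\varepsilon$-congruent to $T$ if there exist points $A,B,C\in\mathbb{R}^2$ such that $ABC$ is congruent to $T$ and $A',B',C'$ lie in the closed disks of radius $\varepsilon'$ around $A,B,C$ respectively. $h(n,T,\varepsilon)$ denotes the maximum, over all point sets $P\subseteq\mathbb{R}^2$ with $|P|=n$, of the number of 3-element subsets of $P$ forming a triangle $\varepsilon$-congruent to $T$, and $h(n,T):=\min_{\varepsilon>0}h(n,T,\varepsilon)$. *)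

theory Defs
  imports "HOL-Analysis.Analysis"
begin

(* A triangle T is given by its side lengths (a,b,c): a = |BC|, b = |CA|, c = |AB|. *)
type_synonym tri = "real \<times> real \<times> real"

definition min_side :: "tri \<Rightarrow> real" where
  "min_side T = (case T of (a,b,c) \<Rightarrow> min a (min b c))"

definition congruent_to :: "real^2 \<Rightarrow> real^2 \<Rightarrow> real^2 \<Rightarrow> tri \<Rightarrow> bool" where
  "congruent_to A B C T = (case T of (a,b,c) \<Rightarrow>
      dist B C = a \<and> dist C A = b \<and> dist A B = c)"

definition eps_congruent :: "tri \<Rightarrow> real \<Rightarrow> real^2 \<Rightarrow> real^2 \<Rightarrow> real^2 \<Rightarrow> bool" where
  "eps_congruent T \<epsilon> A' B' C' =
     (\<exists>A B C. congruent_to A B C T \<and>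
        dist A' A \<le> \<epsilon> * min_side T \<and> dist B' B \<le> \<epsilon> * min_side T \<and>
        dist C' C \<le> \<epsilon> * min_side T)"

definition num_eps_congruent :: "tri \<Rightarrow> real \<Rightarrow> (real^2) set \<Rightarrow> nat" where
  "num_eps_congruent T \<epsilon> P = card {S. S \<subseteq> P \<and> card S = 3 \<and>
      (\<exists>A' B' C'. S = {A', B', C'} \<and> eps_congruent T \<epsilon> A' B' C')}"

definition h_eps :: "nat \<Rightarrow> tri \<Rightarrow> real \<Rightarrow> nat" where
  "h_eps n T \<epsilon> = Max {num_eps_congruent T \<epsilon> P | P. finite P \<and> card P = n}"

definition h :: "nat \<Rightarrow> tri \<Rightarrow> nat" where
  "h n T = Min {h_eps n T \<epsilon> | \<epsilon>. \<epsilon> > 0}"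

end

theory Submission
  imports Defs
begin

definition qf :: "nat \<Rightarrow> nat" where
  "qf n = (n div 3) * ((n+1) div 3) + ((n+1) div 3) * ((n+2) div 3) + (n div 3) * ((n+2) div 3)"
definition tf :: "nat \<Rightarrow> nat" where
  "tf n = (n div 3) * ((n+1) div 3) * ((n+2) div 3)"

lemma n3cases: fixes n :: nat obtains k where "n = 3*k+3" | k where "n = 3*k+4" | k where "n = 3*k+5" | "n < 3"
proof -
  consider "n < 3" | "n mod 3 = 0" "n \<ge> 3" | "n mod 3 = 1" "n \<ge> 3" | "n mod 3 = 2" "n \<ge> 3" by linarith
  then show ?thesis
  proof cases
    case 2 then have "n = 3*(n div 3 - 1) + 3" by presburger
    then show ?thesis using that by blast
  next
    case 3 then have "n = 3*(n div 3 - 1) + 4" by presburger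
    then show ?thesis using that by blast
  next
    case 4 then have "n = 3*(n div 3 - 1) + 5" by presburger
    then show ?thesis using that by blast
  qed (use that in blast)
qed

lemma d3: "Suc (k*3) div 3 = k" "Suc (Suc (k*3)) div 3 = k" "(k*3) div 3 = k"
  by presburger+

lemma qf_step3: "n \<ge> 3 \<Longrightarrow> qf (n-3) + 2*(n-3) + 3 \<le> qf n"
  by (cases n rule: n3cases; simp add: qf_def algebra_simps d3)
lemma qf_step2: "n \<ge> 2 \<Longrightarrow> qf (n-2) + (n-2) + 1 \<le> qf n"
  apply (cases n rule: n3cases)
  apply (simp_all add: qf_def algebra_simps d3)
  apply (cases "n = 2"; simp add: qf_def)
  done
lemma tf_step3: "n \<ge> 3 \<Longrightarrow> tf (n-3) + qf (n-3) + (n-3) + 1 \<le> tf n"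
  by (cases n rule: n3cases; simp add: qf_def tf_def algebra_simps d3)


definition edgs :: "('a \<Rightarrow> 'a \<Rightarrow> bool) \<Rightarrow> 'a set \<Rightarrow> 'a set set" where
  "edgs E V = {S. S \<subseteq> V \<and> card S = 2 \<and> (\<forall>x\<in>S. \<forall>y\<in>S. x \<noteq> y \<longrightarrow> E x y)}"
definition tris :: "('a \<Rightarrow> 'a \<Rightarrow> bool) \<Rightarrow> 'a set \<Rightarrow> 'a set set" where
  "tris E V = {S. S \<subseteq> V \<and> card S = 3 \<and> (\<forall>x\<in>S. \<forall>y\<in>S. x \<noteq> y \<longrightarrow> E x y)}"

definition k4free :: "('a \<Rightarrow> 'a \<Rightarrow> bool) \<Rightarrow> bool" where
  "k4free E = (\<forall>a b c d. distinct [a,b,c,d] \<longrightarrow> E a b \<longrightarrow> E a c \<longrightarrow> E a d \<longrightarrow> E b c \<longrightarrow> E b d \<longrightarrow> E c d \<longrightarrow> False)"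

lemma fin_edgs: "finite V \<Longrightarrow> finite (edgs E V)"
  unfolding edgs_def by (rule finite_subset[of _ "Pow V"]) auto
lemma fin_tris: "finite V \<Longrightarrow> finite (tris E V)"
  unfolding tris_def by (rule finite_subset[of _ "Pow V"]) auto

lemma card_Un3: "card (A \<union> B \<union> C) \<le> card A + card B + card C"
  using card_Un_le[of "A \<union> B" C] card_Un_le[of A B] by linarith
lemma card_Un4: "card (A \<union> B \<union> C \<union> D) \<le> card A + card B + card C + card D"
  using card_Un_le[of "A \<union> B \<union> C" D] card_Un3[of A B C] by linarith

lemma card_le2_of3: "\<not> (P x \<and> P y \<and> P z) \<Longrightarrow> card {t\<in>{x,y,z}. P t} \<le> 2"
proof -
  assume "\<not> (P x \<and> P y \<and> P z)"
  then have "{t\<in>{x,y,z}. P t} \<subseteq> {y,z} \<or> {t\<in>{x,y,z}. P t} \<subseteq> {x,z} \<or> {t\<in>{x,y,z}. P t} \<subseteq> {x,y}" by auto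
  moreover have "card {a,b} \<le> 2" for a b :: 'a by (simp add: card_insert_le_m1)
  ultimately show ?thesis by (meson card_mono finite.emptyI finite.insertI order_trans)
qed

lemma card_le1_of2: "\<not> (P x \<and> P y) \<Longrightarrow> card {t\<in>{x,y}. P t} \<le> 1"
proof -
  assume "\<not> (P x \<and> P y)"
  then have "{t\<in>{x,y}. P t} \<subseteq> {y} \<or> {t\<in>{x,y}. P t} \<subseteq> {x}" by auto
  then show ?thesis
  proof (elim disjE)
    assume h: "{t\<in>{x,y}. P t} \<subseteq> {y}"
    show ?thesis using card_mono[OF _ h] by simp
  next
    assume h: "{t\<in>{x,y}. P t} \<subseteq> {x}"
    show ?thesis using card_mono[OF _ h] by simp
  qed
qed

lemma edgs_bound:
  assumes "finite V" "\<And>x y. E x y \<Longrightarrow> E y x" "k4free E"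
  shows "card (edgs E V) \<le> qf (card V)"
  using assms(1)
proof (induction "card V" arbitrary: V rule: less_induct)
  case less
  show ?case
  proof (cases "\<exists>x\<in>V. \<exists>y\<in>V. \<exists>z\<in>V. x \<noteq> y \<and> y \<noteq> z \<and> x \<noteq> z \<and> E x y \<and> E y z \<and> E x z")
    case True
    then obtain x y z where xyz: "x\<in>V" "y\<in>V" "z\<in>V" "x \<noteq> y" "y \<noteq> z" "x \<noteq> z" "E x y" "E y z" "E x z" by blast
    define W where "W = V - {x,y,z}"
    have cW: "card W = card V - 3" unfolding W_def using xyz less.prems by (simp add: card_Diff_subset)
    have cV: "card V \<ge> 3"
    proof -
      have "card {x,y,z} \<le> card V" by (rule card_mono) (use xyz less.prems in auto)
      then show ?thesis using xyz by simp
    qed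
    have finW: "finite W" using less.prems W_def by simp
    have IH: "card (edgs E W) \<le> qf (card W)" using less.hyps[of W] cW cV finW by simp
    define F where "F w = (\<lambda>t. {w,t}) ` {t\<in>{x,y,z}. E w t}" for w
    have sub: "edgs E V \<subseteq> edgs E W \<union> {{x,y},{y,z},{x,z}} \<union> (\<Union>w\<in>W. F w)"
    proof
      fix S assume S: "S \<in> edgs E V"
      then obtain a b where ab: "S = {a,b}" "a \<noteq> b" "a \<in> V" "b \<in> V" "E a b" "E b a"
        unfolding edgs_def card_2_iff by auto
      show "S \<in> edgs E W \<union> {{x,y},{y,z},{x,z}} \<union> (\<Union>w\<in>W. F w)"
      proof (cases "a \<in> {x,y,z}")
        case True
        show ?thesis
        proof (cases "b \<in> {x,y,z}")
          case True
          then show ?thesis using \<open>a \<in> {x,y,z}\<close> ab by (auto simp: insert_commute)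
        next
          case False
          then have "b \<in> W" using ab W_def by auto
          moreover have "S \<in> F b" using ab True unfolding F_def by (auto simp: insert_commute)
          ultimately show ?thesis by blast
        qed
      next
        case False
        show ?thesis
        proof (cases "b \<in> {x,y,z}")
          case True
          then have "a \<in> W" using ab W_def False by auto
          moreover have "S \<in> F a" using ab True unfolding F_def by (auto simp: insert_commute)
          ultimately show ?thesis by blast
        next
          case bF: False
          then have "S \<in> edgs E W" using S False ab unfolding edgs_def W_def by auto
          then show ?thesis by blast
        qed
      qed
    qed
    have cF: "card (F w) \<le> 2" if "w \<in> W" for w
    proof -
      have "\<not> (E w x \<and> E w y \<and> E w z)"
      proof
        assume h: "E w x \<and> E w y \<and> E w z"
        have "w \<notin> {x,y,z}" using that W_def by auto
        then have "distinct [w,x,y,z]" using xyz by auto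
        then show False using h xyz assms(3) unfolding k4free_def by blast
      qed
      then have "card {t\<in>{x,y,z}. E w t} \<le> 2" by (rule card_le2_of3)
      then show ?thesis unfolding F_def using card_image_le[of "{t\<in>{x,y,z}. E w t}" "\<lambda>t. {w,t}"] by simp
    qed
    have "card (edgs E V) \<le> card (edgs E W \<union> {{x,y},{y,z},{x,z}} \<union> (\<Union>w\<in>W. F w))"
      by (rule card_mono[OF _ sub]) (use finW fin_edgs[OF finW] in \<open>simp add: F_def\<close>)
    also have "\<dots> \<le> card (edgs E W) + card {{x,y},{y,z},{x,z}} + card (\<Union>w\<in>W. F w)"
      by (rule card_Un3)
    also have "card {{x,y},{y,z},{x,z}} \<le> 3" by (simp add: card_insert_le_m1)
    also have "card (\<Union>w\<in>W. F w) \<le> (\<Sum>w\<in>W. card (F w))" by (rule card_UN_le[OF finW])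
    also have "\<dots> \<le> (\<Sum>w\<in>W. 2)" by (rule sum_mono) (use cF in auto)
    also have "\<dots> = 2 * card W" by simp
    finally have "card (edgs E V) \<le> qf (card W) + 3 + 2 * card W" using IH by linarith
    moreover have "qf (card W) + 2 * card W + 3 \<le> qf (card V)" using qf_step3[OF cV] by (simp only: cW)
    ultimately show ?thesis by linarith
  next
    case False
    show ?thesis
    proof (cases "\<exists>x\<in>V. \<exists>y\<in>V. x \<noteq> y \<and> E x y")
      case True
      then obtain x y where xy: "x\<in>V" "y\<in>V" "x \<noteq> y" "E x y" by blast
      define W where "W = V - {x,y}"
      have cW: "card W = card V - 2" unfolding W_def using xy less.prems by (simp add: card_Diff_subset)
      have cV: "card V \<ge> 2" using xy less.prems
      proof -
        have "card {x,y} \<le> card V" by (rule card_mono) (use xy less.prems in auto)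
        then show ?thesis using xy by simp
      qed
      have finW: "finite W" using less.prems W_def by simp
      have IH: "card (edgs E W) \<le> qf (card W)" using less.hyps[of W] cW cV finW by simp
      define F where "F w = (\<lambda>t. {w,t}) ` {t\<in>{x,y}. E w t}" for w
      have sub: "edgs E V \<subseteq> edgs E W \<union> {{x,y}} \<union> (\<Union>w\<in>W. F w)"
      proof
        fix S assume S: "S \<in> edgs E V"
        then obtain a b where ab: "S = {a,b}" "a \<noteq> b" "a \<in> V" "b \<in> V" "E a b" "E b a"
          unfolding edgs_def card_2_iff by auto
        show "S \<in> edgs E W \<union> {{x,y}} \<union> (\<Union>w\<in>W. F w)"
        proof (cases "a \<in> {x,y}")
          case True
          show ?thesis
          proof (cases "b \<in> {x,y}")
            case True
            then show ?thesis using \<open>a \<in> {x,y}\<close> ab by (auto simp: insert_commute)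
          next
            case False
            then have "b \<in> W" using ab W_def by auto
            moreover have "S \<in> F b" using ab True unfolding F_def by (auto simp: insert_commute)
            ultimately show ?thesis by blast
          qed
        next
          case False
          show ?thesis
          proof (cases "b \<in> {x,y}")
            case True
            then have "a \<in> W" using ab W_def False by auto
            moreover have "S \<in> F a" using ab True unfolding F_def by (auto simp: insert_commute)
            ultimately show ?thesis by blast
          next
            case bF: False
            then have "S \<in> edgs E W" using S False ab unfolding edgs_def W_def by auto
            then show ?thesis by blast
          qed
        qed
      qed
      have cF: "card (F w) \<le> 1" if "w \<in> W" for w
      proof -
        have "\<not> (E w x \<and> E w y)"
        proof
          assume h: "E w x \<and> E w y"
          have "w \<notin> {x,y}" using that W_def by auto
          then show False using h xy False assms(2) less.prems that W_def by blast
        qed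
        then have "card {t\<in>{x,y}. E w t} \<le> 1" by (rule card_le1_of2)
        then show ?thesis unfolding F_def using card_image_le[of "{t\<in>{x,y}. E w t}" "\<lambda>t. {w,t}"] by simp
      qed
      have "card (edgs E V) \<le> card (edgs E W \<union> {{x,y}} \<union> (\<Union>w\<in>W. F w))"
        by (rule card_mono[OF _ sub]) (use finW fin_edgs[OF finW] in \<open>simp add: F_def\<close>)
      also have "\<dots> \<le> card (edgs E W) + card {{x,y}} + card (\<Union>w\<in>W. F w)"
        by (rule card_Un3)
      also have "card (\<Union>w\<in>W. F w) \<le> (\<Sum>w\<in>W. card (F w))" by (rule card_UN_le[OF finW])
      also have "\<dots> \<le> (\<Sum>w\<in>W. 1)" by (rule sum_mono) (use cF in auto)
      also have "\<dots> = card W" by simp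
      finally have "card (edgs E V) \<le> qf (card W) + 1 + card W" using IH by simp
      moreover have "qf (card W) + card W + 1 \<le> qf (card V)" using qf_step2[OF cV] by (simp only: cW)
      ultimately show ?thesis by linarith
    next
      case False
      have "S \<notin> edgs E V" for S
      proof
        assume "S \<in> edgs E V"
        then obtain a b where "S = {a,b}" "a \<noteq> b" "S \<subseteq> V" "\<forall>x\<in>S. \<forall>y\<in>S. x \<noteq> y \<longrightarrow> E x y"
          unfolding edgs_def card_2_iff by blast
        then show False using False by blast
      qed
      then have "edgs E V = {}" by blast
      then show ?thesis by simp
    qed
  qed
qed
lemma tris_bound:
  assumes "finite V" "\<And>x y. E x y \<Longrightarrow> E y x" "k4free E"
  shows "card (tris E V) \<le> tf (card V)"
  using assms(1)
proof (induction "card V" arbitrary: V rule: less_induct)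
  case less
  show ?case
  proof (cases "\<exists>x\<in>V. \<exists>y\<in>V. \<exists>z\<in>V. x \<noteq> y \<and> y \<noteq> z \<and> x \<noteq> z \<and> E x y \<and> E y z \<and> E x z")
    case True
    then obtain x y z where xyz: "x\<in>V" "y\<in>V" "z\<in>V" "x \<noteq> y" "y \<noteq> z" "x \<noteq> z" "E x y" "E y z" "E x z" by blast
    define T where "T = {x,y,z}"
    have cT: "card T = 3" "finite T" using xyz T_def by auto
    have ET: "\<And>a b. a \<in> T \<Longrightarrow> b \<in> T \<Longrightarrow> a \<noteq> b \<Longrightarrow> E a b"
      using xyz assms(2) T_def by auto
    define W where "W = V - T"
    have cW: "card W = card V - 3" unfolding W_def T_def using xyz less.prems by (simp add: card_Diff_subset)
    have cV: "card V \<ge> 3"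
    proof -
      have "card {x,y,z} \<le> card V" by (rule card_mono) (use xyz less.prems in auto)
      then show ?thesis using xyz by simp
    qed
    have finW: "finite W" using less.prems W_def by simp
    have IH: "card (tris E W) \<le> tf (card W)" using less.hyps[of W] cW cV finW by simp
    have EQ: "card (edgs E W) \<le> qf (card W)" using edgs_bound[OF finW assms(2,3)] by simp
    define F2 where "F2 w = (if E w x \<and> E w y then {{w,x,y}} else {}) \<union> (if E w y \<and> E w z then {{w,y,z}} else {})
       \<union> (if E w x \<and> E w z then {{w,x,z}} else {})" for w
    define F1 where "F1 e = (\<lambda>t. insert t e) ` {t \<in> T. \<forall>u\<in>e. E u t}" for e
    have sub: "tris E V \<subseteq> tris E W \<union> {T} \<union> (\<Union>w\<in>W. F2 w) \<union> (\<Union>e\<in>edgs E W. F1 e)"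
    proof
      fix S assume S: "S \<in> tris E V"
      then have S3: "card S = 3" "S \<subseteq> V" and SE: "\<And>a b. a \<in> S \<Longrightarrow> b \<in> S \<Longrightarrow> a \<noteq> b \<Longrightarrow> E a b"
        unfolding tris_def by auto
      have finS: "finite S"
      proof (rule ccontr)
        assume "infinite S"
        then show False using S3 by simp
      qed
      have split: "card (S - T) + card (S \<inter> T) = 3"
        proof -
        have "card ((S - T) \<union> (S \<inter> T)) = card (S - T) + card (S \<inter> T)"
          by (rule card_Un_disjoint) (use finS in auto)
        moreover have "(S - T) \<union> (S \<inter> T) = S" by blast
        ultimately show ?thesis using S3 by simp
      qed
      have le3: "card (S - T) \<le> 3" using split by linarith
      consider "card (S - T) = 0" | "card (S - T) = 1" | "card (S - T) = 2" | "card (S - T) = 3" using le3 by linarith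
      then show "S \<in> tris E W \<union> {T} \<union> (\<Union>w\<in>W. F2 w) \<union> (\<Union>e\<in>edgs E W. F1 e)"
      proof cases
        case 1
        then have "S \<subseteq> T" using finS by auto
        then have "S = T" using card_subset_eq[OF cT(2)] S3 cT by simp
        then show ?thesis by blast
      next
        case 4
        then have "S - T = S" using card_subset_eq[OF finS Diff_subset[of S T]] S3(1) by simp
        then have "S \<subseteq> W" using S3 W_def by auto
        then have "S \<in> tris E W" using S unfolding tris_def by auto
        then show ?thesis by blast
      next
        case 2
        then obtain w where w: "S - T = {w}" using card_1_singletonE by blast
        have "card (S \<inter> T) = 2" using split 2 by linarith
        then obtain t1 t2 where t: "S \<inter> T = {t1,t2}" "t1 \<noteq> t2" unfolding card_2_iff by blast
        have Seq: "S = {w,t1,t2}" using w t by blast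
        have wW: "w \<in> W" using w S3 W_def by auto
        have e: "E w t1" "E w t2" using SE Seq t w by auto
        have tT: "t1 \<in> T" "t2 \<in> T" using t by auto
        have "S \<in> F2 w" using tT e t(2) unfolding Seq F2_def T_def by (auto simp: insert_commute)
        then show ?thesis using wW by blast
      next
        case 3
        then obtain u v where uv: "S - T = {u,v}" "u \<noteq> v" unfolding card_2_iff by blast
        have "card (S \<inter> T) = 1" using split 3 by linarith
        then obtain t where t: "S \<inter> T = {t}" using card_1_singletonE by blast
        have Seq: "S = insert t {u,v}" using uv t by blast
        have uvS: "u \<in> S" "v \<in> S" using uv by blast+
        have "E u v" "E v u" using SE[OF uvS] SE[OF uvS(2,1)] uv(2) by auto
        then have e: "{u,v} \<in> edgs E W" using uv S3 W_def unfolding edgs_def by auto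
        have "S \<in> F1 {u,v}" unfolding F1_def Seq using SE t uv Seq by auto
        then show ?thesis using e by blast
      qed
    qed
    have cF2: "card (F2 w) \<le> 1" if "w \<in> W" for w
    proof -
      have "\<not> (E w x \<and> E w y \<and> E w z)"
      proof
        assume h: "E w x \<and> E w y \<and> E w z"
        have "w \<notin> {x,y,z}" using that W_def T_def by auto
        then have "distinct [w,x,y,z]" using xyz by auto
        then show False using h xyz assms(3) unfolding k4free_def by blast
      qed
      then have "F2 w \<subseteq> {{w,x,y}} \<or> F2 w \<subseteq> {{w,y,z}} \<or> F2 w \<subseteq> {{w,x,z}}" unfolding F2_def by auto
      then show ?thesis
      proof (elim disjE)
        assume h: "F2 w \<subseteq> {{w,x,y}}"
        show ?thesis using card_mono[OF _ h] by simp
      next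
        assume h: "F2 w \<subseteq> {{w,y,z}}"
        show ?thesis using card_mono[OF _ h] by simp
      next
        assume h: "F2 w \<subseteq> {{w,x,z}}"
        show ?thesis using card_mono[OF _ h] by simp
      qed
    qed
    have cF1: "card (F1 e) \<le> 1" if "e \<in> edgs E W" for e
    proof -
      have e2: "card e = 2" "e \<subseteq> W" "\<forall>x\<in>e. \<forall>y\<in>e. x \<noteq> y \<longrightarrow> E x y"
        using that unfolding edgs_def by auto
      obtain u v where uv0: "e = {u,v}" "u \<noteq> v" using e2(1) unfolding card_2_iff by blast
      have uv: "e = {u,v}" "u \<noteq> v" "u \<in> W" "v \<in> W" "E u v"
        using uv0 e2 by auto
      have "finite (F1 e)" unfolding F1_def using cT by simp
      moreover have "\<forall>a\<in>F1 e. \<forall>b\<in>F1 e. a = b"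
      proof (intro ballI)
        fix a b assume a: "a \<in> F1 e" and b: "b \<in> F1 e"
        then obtain t t' where tt: "a = insert t e" "b = insert t' e" "t \<in> T" "t' \<in> T"
          "E u t" "E v t" "E u t'" "E v t'" unfolding F1_def uv by auto
        show "a = b"
        proof (rule ccontr)
          assume "a \<noteq> b"
          then have "t \<noteq> t'" using tt by auto
          moreover have "u \<notin> T" "v \<notin> T" using uv W_def by auto
          ultimately have "distinct [u,v,t,t']" using uv tt by auto
          then show False using assms(3) uv tt ET[of t t'] \<open>t \<noteq> t'\<close> unfolding k4free_def by blast
        qed
      qed
      ultimately have "card (F1 e) \<le> Suc 0" using card_le_Suc0_iff_eq[of "F1 e"] by blast
      then show ?thesis by simp
    qed
    have finE: "finite (edgs E W)" using fin_edgs[OF finW] .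
    have "card (tris E V) \<le> card (tris E W \<union> {T} \<union> (\<Union>w\<in>W. F2 w) \<union> (\<Union>e\<in>edgs E W. F1 e))"
    proof (rule card_mono[OF _ sub])
      have "finite (F2 w)" for w unfolding F2_def by simp
      moreover have "finite (F1 e)" for e unfolding F1_def using cT by simp
      ultimately show "finite (tris E W \<union> {T} \<union> (\<Union>w\<in>W. F2 w) \<union> (\<Union>e\<in>edgs E W. F1 e))"
        using finW finE fin_tris[OF finW] by blast
    qed
    also have "\<dots> \<le> card (tris E W) + card {T} + card (\<Union>w\<in>W. F2 w) + card (\<Union>e\<in>edgs E W. F1 e)"
      by (rule card_Un4)
    also have "card (\<Union>w\<in>W. F2 w) \<le> (\<Sum>w\<in>W. card (F2 w))" by (rule card_UN_le[OF finW])
    also have "\<dots> \<le> (\<Sum>w\<in>W. 1)" by (rule sum_mono) (use cF2 in auto)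
    also have "card (\<Union>e\<in>edgs E W. F1 e) \<le> (\<Sum>e\<in>edgs E W. card (F1 e))" by (rule card_UN_le[OF finE])
    also have "\<dots> \<le> (\<Sum>e\<in>edgs E W. 1)" by (rule sum_mono) (use cF1 in auto)
    finally have "card (tris E V) \<le> tf (card W) + 1 + card W + qf (card W)" using IH EQ by simp
    moreover have "tf (card W) + qf (card W) + card W + 1 \<le> tf (card V)" using tf_step3[OF cV] by (simp only: cW)
    ultimately show ?thesis by linarith
  next
    case False
    have "tris E V = {}"
    proof (rule ccontr)
      assume "tris E V \<noteq> {}"
      then obtain S where "S \<in> tris E V" by blast
      then obtain a b c where abc: "S = {a,b,c}" "a \<noteq> b" "b \<noteq> c" "a \<noteq> c" "S \<subseteq> V"
        "\<forall>x\<in>S. \<forall>y\<in>S. x \<noteq> y \<longrightarrow> E x y"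
        unfolding tris_def card_3_iff by blast
      have inS: "a \<in> S" "b \<in> S" "c \<in> S" using abc(1) by blast+
      have "a \<in> V" "b \<in> V" "c \<in> V" using inS abc(5) by blast+
      moreover have "E a b" "E b c" "E a c" using inS abc(2-4,6) by blast+
      ultimately show False using False abc(2-4) by blast
    qed
    then show ?thesis by simp
  qed
qed


lemma det_pos:
  fixes S a b c p q r :: real
  assumes S: "S > 0"
    and a: "24/25*S \<le> a" "a \<le> 26/25*S" and b: "24/25*S \<le> b" "b \<le> 26/25*S"
    and c: "24/25*S \<le> c" "c \<le> 26/25*S"
    and p: "23/50*S \<le> p" "p \<le> 27/50*S" and q: "23/50*S \<le> q" "q \<le> 27/50*S"
    and r: "23/50*S \<le> r" "r \<le> 27/50*S"
  shows "a*b*c + 2*p*q*r - a*q^2 - b*r^2 - c*p^2 > 0"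
proof -
  have S0: "S \<ge> 0" using S by simp
  have 1: "(24/25*S)*(24/25*S)*(24/25*S) \<le> a*b*c"
    by (intro mult_mono) (use S0 a b c in auto)
  have 2: "(23/50*S)*(23/50*S)*(23/50*S) \<le> p*q*r"
    by (intro mult_mono) (use S0 p q r in auto)
  have sq: "x^2 \<le> (27/50*S)^2" if "23/50*S \<le> x" "x \<le> 27/50*S" for x
    by (rule power_mono) (use that S0 in auto)
  have 3: "a*q^2 \<le> (26/25*S)*(27/50*S)^2"
    by (intro mult_mono sq) (use S0 a q in auto)
  have 4: "b*r^2 \<le> (26/25*S)*(27/50*S)^2"
    by (intro mult_mono sq) (use S0 b r in auto)
  have 5: "c*p^2 \<le> (26/25*S)*(27/50*S)^2"
    by (intro mult_mono sq) (use S0 c p in auto)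
  have "a*b*c + 2*p*q*r - a*q^2 - b*r^2 - c*p^2 \<ge>
     (24/25*S)*(24/25*S)*(24/25*S) + 2*((23/50*S)*(23/50*S)*(23/50*S)) - 3*((26/25*S)*(27/50*S)^2)"
    using 1 2 3 4 5 by linarith
  moreover have "(24/25*S)*(24/25*S)*(24/25*S) + 2*((23/50*S)*(23/50*S)*(23/50*S)) - 3*((26/25*S)*(27/50*S)^2)
     = (21202/125000) * (S*S*S)" by (simp add: power2_eq_square algebra_simps)
  moreover have "S*S*S > 0" using S by simp
  ultimately show ?thesis by linarith
qed

lemma gram_zero:
  fixes u1 u2 v1 v2 w1 w2 :: real
  shows "(u1 * u1+u2 * u2) * (v1 * v1+v2 * v2) * (w1 * w1+w2 * w2) + 2 * (u1 * v1+u2 * v2) * (v1 * w1+v2 * w2) * (u1 * w1+u2 * w2)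
     - (u1 * u1+u2 * u2) * (v1 * w1+v2 * w2)^2 - (v1 * v1+v2 * v2) * (u1 * w1+u2 * w2)^2 - (w1 * w1+w2 * w2) * (u1 * v1+u2 * v2)^2 = 0"
  by (simp add: power2_eq_square algebra_simps)

lemma dist2: "(dist (x::real^2) y)^2 = (x$1 - y$1)^2 + (x$2 - y$2)^2"
  by (simp add: dist_vec_def L2_set_def sum_2 dist_real_def)

lemma sq_bounds:
  fixes s d :: real
  assumes "s > 0" "99/100 * s \<le> d" "d \<le> 101/100 * s"
  shows "9801/10000 * s^2 \<le> d^2" "d^2 \<le> 10201/10000 * s^2"
proof -
  have "(99/100 * s)^2 \<le> d^2" by (rule power_mono) (use assms in auto)
  moreover have "(99/100 * s)^2 = 9801/10000 * s^2" by (simp add: power2_eq_square)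
  ultimately show "9801/10000 * s^2 \<le> d^2" by simp
  have "d^2 \<le> (101/100 * s)^2" by (rule power_mono) (use assms in auto)
  moreover have "(101/100 * s)^2 = 10201/10000 * s^2" by (simp add: power2_eq_square)
  ultimately show "d^2 \<le> 10201/10000 * s^2" by simp
qed

lemma no_k4:
  fixes a b c d :: "real^2" and s :: real
  assumes s: "s > 0"
    and ab: "99/100 * s \<le> dist a b" "dist a b \<le> 101/100 * s"
    and ac: "99/100 * s \<le> dist a c" "dist a c \<le> 101/100 * s"
    and ad: "99/100 * s \<le> dist a d" "dist a d \<le> 101/100 * s"
    and bc: "99/100 * s \<le> dist b c" "dist b c \<le> 101/100 * s"
    and bd: "99/100 * s \<le> dist b d" "dist b d \<le> 101/100 * s"
    and cd: "99/100 * s \<le> dist c d" "dist c d \<le> 101/100 * s"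
  shows False
proof -
  define u1 where "u1 = b$1 - a$1"
  define u2 where "u2 = b$2 - a$2"
  define v1 where "v1 = c$1 - a$1"
  define v2 where "v2 = c$2 - a$2"
  define w1 where "w1 = d$1 - a$1"
  define w2 where "w2 = d$2 - a$2"
  define S where "S = s^2"
  have S: "S > 0" using s S_def by simp
  note Dab = sq_bounds[OF s ab] and Dac = sq_bounds[OF s ac] and Dad = sq_bounds[OF s ad]
    and Dbc = sq_bounds[OF s bc] and Dbd = sq_bounds[OF s bd] and Dcd = sq_bounds[OF s cd]
  have eab: "(dist a b)^2 = u1 * u1 + u2 * u2" unfolding dist2 u1_def u2_def by (simp add: power2_eq_square algebra_simps)
  have eac: "(dist a c)^2 = v1 * v1 + v2 * v2" unfolding dist2 v1_def v2_def by (simp add: power2_eq_square algebra_simps)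
  have ead: "(dist a d)^2 = w1 * w1 + w2 * w2" unfolding dist2 w1_def w2_def by (simp add: power2_eq_square algebra_simps)
  have ebc: "u1 * v1 + u2 * v2 = (dist a b)^2/2 + (dist a c)^2/2 - (dist b c)^2/2"
    unfolding dist2 u1_def u2_def v1_def v2_def by (simp add: power2_eq_square field_simps)
  have ebd: "u1 * w1 + u2 * w2 = (dist a b)^2/2 + (dist a d)^2/2 - (dist b d)^2/2"
    unfolding dist2 u1_def u2_def w1_def w2_def by (simp add: power2_eq_square field_simps)
  have ecd: "v1 * w1 + v2 * w2 = (dist a c)^2/2 + (dist a d)^2/2 - (dist c d)^2/2"
    unfolding dist2 v1_def v2_def w1_def w2_def by (simp add: power2_eq_square field_simps)
  have "(u1 * u1 + u2 * u2) * (v1 * v1 + v2 * v2) * (w1 * w1 + w2 * w2)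
      + 2 * (u1 * v1 + u2 * v2) * (v1 * w1 + v2 * w2) * (u1 * w1 + u2 * w2)
      - (u1 * u1 + u2 * u2) * (v1 * w1 + v2 * w2)^2 - (v1 * v1 + v2 * v2) * (u1 * w1 + u2 * w2)^2
      - (w1 * w1 + w2 * w2) * (u1 * v1 + u2 * v2)^2 > 0"
    apply (rule det_pos[OF S])
    apply (unfold eab[symmetric] eac[symmetric] ead[symmetric] ebc ebd ecd S_def)
    apply (insert Dab Dac Dad Dbc Dbd Dcd zero_le_power2[of s])
    by linarith+
  then show False using gram_zero by simp
qed

lemma dist_vec2: "dist (vector [a,b] :: real^2) (vector [c,d]) = sqrt ((a-c)^2 + (b-d)^2)"
proof -
  have "(dist (vector [a,b] :: real^2) (vector [c,d]))^2 = (a-c)^2 + (b-d)^2" by (simp add: dist2)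
  then show ?thesis by (metis zero_le_dist real_sqrt_unique)
qed

lemma vec2_eqD: "(vector [a,b] :: real^2) = vector [c,d] \<Longrightarrow> a = c \<and> b = d"
  by (metis vector_2)

lemma dist_close:
  fixes X Y X' Y' :: "real^2"
  assumes "dist X' X \<le> e" "dist Y' Y \<le> e" "dist X Y = s"
  shows "s - 2*e \<le> dist X' Y'" "dist X' Y' \<le> s + 2*e"
proof -
  have "dist X Y' \<le> dist X Y + dist Y Y'" by (rule dist_triangle)
  moreover have "dist X' Y' \<le> dist X' X + dist X Y'" by (rule dist_triangle)
  ultimately show "dist X' Y' \<le> s + 2*e" using assms by (simp add: dist_commute)
  have "dist X Y \<le> dist X X' + dist X' Y" by (rule dist_triangle)
  moreover have "dist X' Y \<le> dist X' Y' + dist Y' Y" by (rule dist_triangle)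
  ultimately show "s - 2*e \<le> dist X' Y'" using assms by (simp add: dist_commute)
qed

lemma upper_bound:
  fixes s :: real and P :: "(real^2) set"
  assumes s: "s > 0" and fin: "finite P"
  shows "num_eps_congruent (s,s,s) (1/200) P \<le> tf (card P)"
proof -
  define E where "E x y = (99/100 * s \<le> dist x y \<and> dist x y \<le> 101/100 * s)" for x y :: "real^2"
  have symE: "E x y \<Longrightarrow> E y x" for x y unfolding E_def by (simp add: dist_commute)
  have k4: "k4free E" unfolding k4free_def E_def using no_k4[OF s] by blast
  have ms: "min_side (s,s,s) = s" by (simp add: min_side_def)
  have sub: "{S. S \<subseteq> P \<and> card S = 3 \<and> (\<exists>A' B' C'. S = {A', B', C'} \<and> eps_congruent (s,s,s) (1/200) A' B' C')}
     \<subseteq> tris E P"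
  proof
    fix S assume "S \<in> {S. S \<subseteq> P \<and> card S = 3 \<and> (\<exists>A' B' C'. S = {A', B', C'} \<and> eps_congruent (s,s,s) (1/200) A' B' C')}"
    then obtain A' B' C' where S: "S \<subseteq> P" "card S = 3" "S = {A',B',C'}" "eps_congruent (s,s,s) (1/200) A' B' C'"
      by blast
    then obtain A B C where c: "dist B C = s" "dist C A = s" "dist A B = s"
      and d: "dist A' A \<le> 1/200 * s" "dist B' B \<le> 1/200 * s" "dist C' C \<le> 1/200 * s"
      unfolding eps_congruent_def congruent_to_def ms by auto
    have "E A' B'" using dist_close[OF d(1) d(2) c(3)] unfolding E_def by simp
    moreover have "E B' C'" using dist_close[OF d(2) d(3) c(1)] unfolding E_def by simp
    moreover have "E C' A'" using dist_close[OF d(3) d(1) c(2)] unfolding E_def by simp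
    ultimately have "\<forall>x\<in>S. \<forall>y\<in>S. x \<noteq> y \<longrightarrow> E x y" using S(3) symE by auto
    then show "S \<in> tris E P" using S unfolding tris_def by auto
  qed
  have "num_eps_congruent (s,s,s) (1/200) P \<le> card (tris E P)"
    unfolding num_eps_congruent_def by (rule card_mono[OF fin_tris[OF fin] sub])
  also have "\<dots> \<le> tf (card P)" by (rule tris_bound[OF fin symE k4])
  finally show ?thesis .
qed

lemma div3_sum: "(n::nat) div 3 + (n+1) div 3 + (n+2) div 3 = n" by presburger

lemma lower_bound:
  fixes s e :: real and n :: nat
  assumes s: "s > 0" and e: "e > 0"
  shows "\<exists>P. finite P \<and> card P = n \<and> tf n \<le> num_eps_congruent (s,s,s) e P"
proof -
  define m0 where "m0 = n div 3"
  define m1 where "m1 = (n+1) div 3"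
  define m2 where "m2 = (n+2) div 3"
  have msum: "m0 + m1 + m2 = n" unfolding m0_def m1_def m2_def by (rule div3_sum)
  define \<delta> where "\<delta> = min e (1/2) * s / (real n + 1)"
  have dpos: "\<delta> > 0" unfolding \<delta>_def using s e by simp
  have dk: "\<delta> * real k \<le> min e (1/2) * s" if "k < n" for k
  proof -
    have "\<delta> * real k \<le> \<delta> * (real n + 1)" using that dpos by simp
    also have "\<dots> = min e (1/2) * s" unfolding \<delta>_def by simp
    finally show ?thesis .
  qed
  define h where "h = s * sqrt 3 / 2"
  have hpos: "h > 0" unfolding h_def using s by simp
  define f0 where "f0 k = (vector [\<delta> * real k, 0] :: real^2)" for k :: nat
  define f1 where "f1 k = (vector [s + \<delta> * real k, 0] :: real^2)" for k :: nat
  define f2 where "f2 k = (vector [s/2 + \<delta> * real k, h] :: real^2)" for k :: nat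
  define V0 where "V0 = (vector [0, 0] :: real^2)"
  define V1 where "V1 = (vector [s, 0] :: real^2)"
  define V2 where "V2 = (vector [s/2, h] :: real^2)"
  define C0 where "C0 = f0 ` {..<m0}"
  define C1 where "C1 = f1 ` {..<m1}"
  define C2 where "C2 = f2 ` {..<m2}"
  have inj0: "inj f0" unfolding inj_def f0_def using dpos by (auto dest!: vec2_eqD)
  have inj1: "inj f1" unfolding inj_def f1_def using dpos by (auto dest!: vec2_eqD)
  have inj2: "inj f2" unfolding inj_def f2_def using dpos by (auto dest!: vec2_eqD)
  have cC0: "card C0 = m0" unfolding C0_def using inj0 by (simp add: card_image inj_on_subset)
  have cC1: "card C1 = m1" unfolding C1_def using inj1 by (simp add: card_image inj_on_subset)
  have cC2: "card C2 = m2" unfolding C2_def using inj2 by (simp add: card_image inj_on_subset)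
  have m_le: "m0 \<le> n" "m1 \<le> n" "m2 \<le> n" using msum by linarith+
  have small: "\<delta> * real k < s" if "k < n" for k
  proof -
    have "min e (1/2) * s \<le> 1/2 * s" using s by (intro mult_right_mono) auto
    then show ?thesis using dk[OF that] s by linarith
  qed
  have d01: "C0 \<inter> C1 = {}"
  proof -
    have "f0 k \<noteq> f1 j" if "k < m0" for k j
    proof
      assume "f0 k = f1 j"
      then have "\<delta> * real k = s + \<delta> * real j" unfolding f0_def f1_def by (auto dest!: vec2_eqD)
      moreover have "\<delta> * real k < s" using small that m_le by simp
      moreover have "\<delta> * real j \<ge> 0" using dpos by simp
      ultimately show False by linarith
    qed
    then show ?thesis unfolding C0_def C1_def by auto
  qed
  have d02: "C0 \<inter> C2 = {}" unfolding C0_def C2_def f0_def f2_def using hpos by (auto dest!: vec2_eqD)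
  have d12: "C1 \<inter> C2 = {}" unfolding C1_def C2_def f1_def f2_def using hpos by (auto dest!: vec2_eqD)
  define P where "P = C0 \<union> C1 \<union> C2"
  have finP: "finite P" unfolding P_def C0_def C1_def C2_def by simp
  have cP: "card P = n"
  proof -
    have "card P = card (C0 \<union> C1) + card C2" unfolding P_def
      by (rule card_Un_disjoint) (use d02 d12 in \<open>auto simp: C0_def C1_def C2_def\<close>)
    also have "card (C0 \<union> C1) = card C0 + card C1"
      by (rule card_Un_disjoint) (use d01 in \<open>auto simp: C0_def C1_def\<close>)
    finally show ?thesis using cC0 cC1 cC2 msum by simp
  qed
  have ms: "min_side (s,s,s) = s" by (simp add: min_side_def)
  have sq3: "(sqrt 3)^2 = (3::real)" by simp
  have cong: "congruent_to V0 V1 V2 (s,s,s)"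
  proof -
    have "dist V1 V2 = sqrt ((s - s/2)^2 + (0 - h)^2)" unfolding V1_def V2_def by (rule dist_vec2)
    also have "(s - s/2)^2 + (0 - h)^2 = s^2" unfolding h_def by (simp add: power2_eq_square field_simps)
    finally have 1: "dist V1 V2 = s" using s by simp
    have "dist V2 V0 = sqrt ((s/2 - 0)^2 + (h - 0)^2)" unfolding V2_def V0_def by (rule dist_vec2)
    also have "(s/2 - 0)^2 + (h - 0)^2 = s^2" unfolding h_def by (simp add: power2_eq_square field_simps)
    finally have 2: "dist V2 V0 = s" using s by simp
    have "dist V0 V1 = sqrt ((0 - s)^2 + (0 - 0)^2)" unfolding V0_def V1_def by (rule dist_vec2)
    then have 3: "dist V0 V1 = s" using s by simp
    show ?thesis unfolding congruent_to_def using 1 2 3 by simp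
  qed
  have closeb: "\<delta> * real k \<le> e * s" if "k < n" for k
  proof -
    have "min e (1/2) * s \<le> e * s" using s by (intro mult_right_mono) auto
    then show ?thesis using dk[OF that] by linarith
  qed
  have near0: "dist x V0 \<le> e * min_side (s,s,s)" if xin: "x \<in> C0" for x
  proof -
    obtain k where k: "k < m0" "x = f0 k" using xin unfolding C0_def by blast
    have "dist x V0 = sqrt ((\<delta> * real k - 0)^2 + (0 - 0)^2)" unfolding k f0_def V0_def by (rule dist_vec2)
    also have "\<dots> = \<delta> * real k" using dpos by simp
    finally show ?thesis using closeb[of k] k m_le ms by simp
  qed
  have near1: "dist x V1 \<le> e * min_side (s,s,s)" if xin: "x \<in> C1" for x
  proof -
    obtain k where k: "k < m1" "x = f1 k" using xin unfolding C1_def by blast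
    have "dist x V1 = sqrt ((s + \<delta> * real k - s)^2 + (0 - 0)^2)" unfolding k f1_def V1_def by (rule dist_vec2)
    also have "\<dots> = \<delta> * real k" using dpos by simp
    finally show ?thesis using closeb[of k] k m_le ms by simp
  qed
  have near2: "dist x V2 \<le> e * min_side (s,s,s)" if xin: "x \<in> C2" for x
  proof -
    obtain k where k: "k < m2" "x = f2 k" using xin unfolding C2_def by blast
    have "dist x V2 = sqrt ((s/2 + \<delta> * real k - s/2)^2 + (h - h)^2)" unfolding k f2_def V2_def by (rule dist_vec2)
    also have "\<dots> = \<delta> * real k" using dpos by simp
    finally show ?thesis using closeb[of k] k m_le ms by simp
  qed
  define g where "g = (\<lambda>(a,b,c). {a,b,c :: real^2})"
  have injg: "inj_on g (C0 \<times> C1 \<times> C2)"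
  proof (rule inj_onI)
    fix x y assume x: "x \<in> C0 \<times> C1 \<times> C2" and y: "y \<in> C0 \<times> C1 \<times> C2" and gxy: "g x = g y"
    obtain a b c where xa: "x = (a,b,c)" "a \<in> C0" "b \<in> C1" "c \<in> C2" using x by auto
    obtain a' b' c' where ya: "y = (a',b',c')" "a' \<in> C0" "b' \<in> C1" "c' \<in> C2" using y by auto
    have eq: "{a,b,c} = {a',b',c'}" using gxy xa ya g_def by simp
    have "a \<noteq> b'" "a \<noteq> c'" "b \<noteq> a'" "b \<noteq> c'" "c \<noteq> a'" "c \<noteq> b'"
      using xa ya d01 d02 d12 by auto
    moreover have "a \<in> {a',b',c'}" "b \<in> {a',b',c'}" "c \<in> {a',b',c'}" using eq by blast+
    ultimately have "a = a'" "b = b'" "c = c'" by auto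
    then show "x = y" using xa ya by simp
  qed
  have img: "g ` (C0 \<times> C1 \<times> C2) \<subseteq> {S. S \<subseteq> P \<and> card S = 3 \<and> (\<exists>A' B' C'. S = {A', B', C'} \<and> eps_congruent (s,s,s) e A' B' C')}"
  proof
    fix S assume "S \<in> g ` (C0 \<times> C1 \<times> C2)"
    then obtain a b c where abc: "S = {a,b,c}" "a \<in> C0" "b \<in> C1" "c \<in> C2" unfolding g_def by auto
    have dist3: "a \<noteq> b" "b \<noteq> c" "a \<noteq> c" using abc d01 d02 d12 by auto
    have "card S = 3" using abc dist3 by simp
    moreover have "S \<subseteq> P" using abc P_def by auto
    moreover have "eps_congruent (s,s,s) e a b c"
      unfolding eps_congruent_def using cong near0[OF abc(2)] near1[OF abc(3)] near2[OF abc(4)] by blast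
    ultimately show "S \<in> {S. S \<subseteq> P \<and> card S = 3 \<and> (\<exists>A' B' C'. S = {A', B', C'} \<and> eps_congruent (s,s,s) e A' B' C')}"
      using abc by blast
  qed
  have finT: "finite {S. S \<subseteq> P \<and> card S = 3 \<and> (\<exists>A' B' C'. S = {A', B', C'} \<and> eps_congruent (s,s,s) e A' B' C')}"
    by (rule finite_subset[of _ "Pow P"]) (use finP in auto)
  have "tf n = m0 * m1 * m2" unfolding tf_def m0_def m1_def m2_def by simp
  also have "\<dots> = card (C0 \<times> C1 \<times> C2)" using cC0 cC1 cC2 by (simp add: card_cartesian_product)
  also have "\<dots> = card (g ` (C0 \<times> C1 \<times> C2))" using injg by (simp add: card_image)
  also have "\<dots> \<le> num_eps_congruent (s,s,s) e P" unfolding num_eps_congruent_def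
    by (rule card_mono[OF finT img])
  finally show ?thesis using finP cP by blast
qed

lemma num_le_choose:
  assumes "finite P"
  shows "num_eps_congruent T e P \<le> card P choose 3"
proof -
  have "num_eps_congruent T e P \<le> card {S. S \<subseteq> P \<and> card S = 3}" unfolding num_eps_congruent_def
    by (rule card_mono) (use assms in auto)
  also have "\<dots> = card P choose 3" using n_subsets[OF assms] by simp
  finally show ?thesis .
qed

theorem theorem1p1:
  fixes s :: real and n :: nat
  assumes "s > 0" and "n \<ge> 1"
  shows "h n (s, s, s) = (n div 3) * ((n + 1) div 3) * ((n + 2) div 3)"
proof -
  define Y where "Y e = {num_eps_congruent (s,s,s) e P | P. finite P \<and> card P = n}" for e
  have finY: "finite (Y e)" for e
    by (rule finite_subset[of _ "{..n choose 3}"]) (auto simp: Y_def intro: num_le_choose)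
  have geY: "tf n \<le> h_eps n (s,s,s) e" if epos: "e > 0" for e
  proof -
    obtain P where P: "finite P" "card P = n" "tf n \<le> num_eps_congruent (s,s,s) e P"
      using lower_bound[OF assms(1) epos] by blast
    have "num_eps_congruent (s,s,s) e P \<in> Y e" unfolding Y_def using P by blast
    then have "num_eps_congruent (s,s,s) e P \<le> Max (Y e)" using finY by simp
    then show ?thesis unfolding h_eps_def Y_def[symmetric] using P by simp
  qed
  have neY: "Y e \<noteq> {}" if "e > 0" for e
    using lower_bound[OF assms(1) that] unfolding Y_def by blast
  have leY: "h_eps n (s,s,s) (1/200) \<le> tf n"
  proof -
    have "\<forall>y\<in>Y (1/200). y \<le> tf n" unfolding Y_def using upper_bound[OF assms(1)] by auto
    then show ?thesis unfolding h_eps_def Y_def[symmetric] using finY neY[of "1/200"] by simp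
  qed
  have hle: "h_eps n (s,s,s) e \<le> n choose 3" if "e > 0" for e
  proof -
    have "Max (Y e) \<in> Y e" using finY neY[OF that] by (rule Max_in)
    then show ?thesis unfolding h_eps_def Y_def[symmetric] unfolding Y_def using num_le_choose by auto
  qed
  have "Min {h_eps n (s,s,s) e | e. e > 0} = tf n"
  proof (rule Min_eqI)
    show "finite {h_eps n (s,s,s) e | e. e > 0}"
      by (rule finite_subset[of _ "{..n choose 3}"]) (use hle in auto)
    show "tf n \<le> y" if "y \<in> {h_eps n (s,s,s) e | e. e > 0}" for y using that geY by auto
    have "h_eps n (s,s,s) (1/200) = tf n" using leY geY[of "1/200"] by simp
    then show "tf n \<in> {h_eps n (s,s,s) e | e. e > 0}" by (metis (mono_tags, lifting) mem_Collect_eq divide_pos_pos zero_less_numeral zero_less_one)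
  qed
  then show ?thesis unfolding h_def tf_def by simp
qed


end
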